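(* Let $a_{1}<a_{2}<a_{3}<\cdots$ be a strictly increasing infinite sequence of positive integers, let $A=\{a_{1},a_{2},a_{3},\ldots\}$, and let $n>0$ be an integer such that: (1) whenever $m>n$, there exist indices $i<r\leq s<j$ with $a_{m}=a_{i}+a_{j}=a_{r}+a_{s}$; and (2) whenever $a=a_{i}+a_{j}=a_{r}+a_{s}>a_{n}$ for some indices $i<r<s<j$, then $a=a_{m}$ for some $m>n$. Suppose $d,a,b$ are integers such that the five numbers $d,a,b,a+d,b+d$ are pairwise distinct and all belong to $A$, and suppose $a_{n}<k$ where $k=a+b+d$. Then every positive multiple of $k$ belongs to $A$, i.e., $mk\in A$ for all integers $m\geq 1$. *)

theory Defs
  imports Main
begin

end

theory Submission
  imports Defs
begin

theorem lemma1:
  fixes a :: "nat \<Rightarrow> int" and A :: "int set" and n :: nat and d x y k :: int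
  assumes mono: "\<And>i. i \<ge> 1 \<Longrightarrow> a i < a (Suc i)"
    and pos: "\<And>i. i \<ge> 1 \<Longrightarrow> a i > 0"
    and A_def: "A = {a i | i. i \<ge> 1}"
    and n_pos: "n > 0"
    and cond1: "\<And>m. m > n \<Longrightarrow>
       \<exists>i r s j. 1 \<le> i \<and> i < r \<and> r \<le> s \<and> s < j \<and> a m = a i + a j \<and> a m = a r + a s"
    and cond2: "\<And>i r s j. 1 \<le> i \<Longrightarrow> i < r \<Longrightarrow> r < s \<Longrightarrow> s < j \<Longrightarrow>
       a i + a j = a r + a s \<Longrightarrow> a i + a j > a n \<Longrightarrow> \<exists>m>n. a i + a j = a m"
    and dist: "distinct [d, x, y, x + d, y + d]"
    and mem: "d \<in> A" "x \<in> A" "y \<in> A" "x + d \<in> A" "y + d \<in> A"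
    and k_def: "k = x + y + d"
    and nk: "a n < k"
  shows "\<forall>m::int. m \<ge> 1 \<longrightarrow> m * k \<in> A"
proof -
  have lt: "a i < a j" if "1 \<le> i" "i < j" for i j
    using that(2)
  proof (induction j)
    case 0 then show ?case by simp
  next
    case (Suc j)
    show ?case
    proof (cases "i = j")
      case True then show ?thesis using mono that(1) by simp
    next
      case False
      then have "i < j" using Suc.prems by simp
      then have "a i < a j" using Suc.IH by simp
      also have "a j < a (Suc j)" using mono \<open>i < j\<close> that(1) by simp
      finally show ?thesis .
    qed
  qed
  have ltiff: "a i < a j \<longleftrightarrow> i < j" if "1 \<le> i" "1 \<le> j" for i j
    using lt[of i j] lt[of j i] that by (cases i j rule: linorder_cases) auto
  have key0: "\<exists>m>n. a i + a j = a m"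
    if "1 \<le> i" "1 \<le> j" "1 \<le> r" "1 \<le> s" "i < j" "r < s" "i < r"
       "distinct [a i, a j, a r, a s]" "a i + a j = a r + a s" "a i + a j > a n" for i j r s
  proof -
    have "r \<noteq> j" "s \<noteq> j" using that(8) by auto
    have "s < j"
    proof (rule ccontr)
      assume "\<not> s < j"
      then have "j < s" using \<open>s \<noteq> j\<close> by simp
      then have "a j < a s" "a i < a r" using lt that by auto
      then show False using that(9) by simp
    qed
    then show ?thesis using cond2[of i r s j] that by simp
  qed
  have key1: "\<exists>m>n. a i + a j = a m"
    if "1 \<le> i" "1 \<le> j" "1 \<le> r" "1 \<le> s" "i < j" "r < s"
       "distinct [a i, a j, a r, a s]" "a i + a j = a r + a s" "a i + a j > a n" for i j r s
  proof -
    have "i \<noteq> r" using that(7) by auto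
    then consider "i < r" | "r < i" by linarith
    then show ?thesis
    proof cases
      case 1 then show ?thesis using key0[of i j r s] that by simp
    next
      case 2
      have "\<exists>m>n. a r + a s = a m"
        using key0[of r s i j] that 2 by auto
      then show ?thesis using that(8) by simp
    qed
  qed
  have key2: "\<exists>m>n. a i + a j = a m"
    if "1 \<le> i" "1 \<le> j" "1 \<le> r" "1 \<le> s"
       "distinct [a i, a j, a r, a s]" "a i + a j = a r + a s" "a i + a j > a n" for i j r s
  proof -
    have "i \<noteq> j" "r \<noteq> s" using that(5) by auto
    then consider "i < j" "r < s" | "j < i" "r < s" | "i < j" "s < r" | "j < i" "s < r"
      by linarith
    then show ?thesis
    proof cases
      case 1 then show ?thesis using key1[of i j r s] that by simp
    next
      case 2 then show ?thesis using key1[of j i r s] that by (auto simp: add.commute)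
    next
      case 3 then show ?thesis using key1[of i j s r] that by (auto simp: add.commute)
    next
      case 4 then show ?thesis using key1[of j i s r] that by (auto simp: add.commute)
    qed
  qed
  have key: "p + q \<in> A"
    if H: "p \<in> A" "q \<in> A" "r \<in> A" "s \<in> A" "distinct [p, q, r, s]" "p + q = r + s" "p + q > a n"
    for p q r s
  proof -
    obtain i j r' s' where "1 \<le> i" "1 \<le> j" "1 \<le> r'" "1 \<le> s'"
      "p = a i" "q = a j" "r = a r'" "s = a s'"
      using H(1-4) unfolding A_def by blast
    then obtain m where "m > n" "p + q = a m" using key2[of i j r' s'] H by auto
    then show ?thesis unfolding A_def using n_pos by auto
  qed
  have posA: "t > 0" if "t \<in> A" for t using that pos unfolding A_def by auto
  have dp: "d > 0" and xp: "x > 0" and yp: "y > 0" using posA mem by auto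
  have kA: "k \<in> A"
    using key[of x "y+d" "x+d" y] mem dist k_def nk by (auto simp: add.assoc)
  have kdA: "k + d \<in> A"
    using key[of k d "x+d" "y+d"] kA mem dist k_def nk dp xp yp by auto
  have stp: "t + k \<in> A \<and> t + k + d \<in> A" if "t \<in> A" "t + d \<in> A" "t \<ge> k" for t
  proof -
    have h1: "(t + d) + x \<in> A"
      using key[of "t+d" x t "x+d"] that mem dist k_def nk dp xp yp by auto
    have h2: "(t + d) + y \<in> A"
      using key[of "t+d" y t "y+d"] that mem dist k_def nk dp xp yp by auto
    have "(t + d + x) + y \<in> A"
      using key[of "t+d+x" y "t+d+y" x] h1 h2 that mem dist k_def nk dp xp yp by auto
    moreover have "(t + d + x) + (y + d) \<in> A"
      using key[of "t+d+x" "y+d" "t+d+y" "x+d"] h1 h2 that mem dist k_def nk dp xp yp by auto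
    ultimately show ?thesis using k_def by (simp add: algebra_simps)
  qed
  have main: "int m * k \<in> A \<and> int m * k + d \<in> A" if "m \<ge> 1" for m :: nat
    using that
  proof (induction m rule: dec_induct)
    case base then show ?case using kA kdA by simp
  next
    case (step m)
    have "int m * k \<ge> k" 
    proof -
      have "k > 0" using kA posA by blast
      moreover have "int m \<ge> 1" using step(1) by simp
      ultimately show ?thesis by (simp add: mult_le_cancel_right1)
    qed
    then have "int m * k + k \<in> A \<and> int m * k + k + d \<in> A" using step(3) stp by blast
    then show ?case by (simp add: algebra_simps)
  qed
  show ?thesis
  proof (intro allI impI)
    fix m :: int assume "m \<ge> 1"
    then have "m = int (nat m)" "nat m \<ge> 1" by auto
    then show "m * k \<in> A" using main[of "nat m"] by metis
  qed
qed

end
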